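(* Let $L$ be the free nilpotent Lie algebra of index $4$ on $X$, i.e. the free Lie algebra on $X$ modulo the ideal spanned by all Lie monomials of degree $\ge 4$ (equivalently, the free Lie algebra in the variety defined by $[[[a,b],c],d]=0$). Then the Lie algebra homomorphism $L\to \mathcal{A}s_3\langle X\rangle^{(-)}$ which is the identity on $X$ is injective; that is, $L$ embeds into the free third-type associative algebra $\mathcal{A}s_3\langle X\rangle$ equipped with the commutator $[a,b]=ab-ba$.
   Context: An associative algebra is called of the third type if it satisfies $abc+bac-bca-cba=0$ for all $a,b,c$. $\mathcal{A}s_3\langle X\rangle$ is the free such algebra on a countable set $X$ over a field of characteristic $0$, and $\mathcal{A}s_3\langle X\rangle^{(-)}$ denotes the same vector space with product $[a,b]=ab-ba$, which is a Lie algebra. *)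

theory Defs
  imports Main
begin

text \<open>Noncommutative polynomials without constant term: functions from words
(lists of generators) to coefficients, with finite support, vanishing on the empty word.\<close>

type_synonym 'k fa = "nat list \<Rightarrow> 'k"

definition fa_carrier :: "('k::field) fa set" where
  "fa_carrier = {p. finite {w. p w \<noteq> 0} \<and> p [] = 0}"

definition fa_zero :: "('k::field) fa" where
  "fa_zero = (\<lambda>w. 0)"

definition fa_add :: "('k::field) fa \<Rightarrow> 'k fa \<Rightarrow> 'k fa" where
  "fa_add p q = (\<lambda>w. p w + q w)"

definition fa_diff :: "('k::field) fa \<Rightarrow> 'k fa \<Rightarrow> 'k fa" where
  "fa_diff p q = (\<lambda>w. p w - q w)"

definition fa_smult :: "'k::field \<Rightarrow> 'k fa \<Rightarrow> 'k fa" where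
  "fa_smult c p = (\<lambda>w. c * p w)"

definition fa_mul :: "('k::field) fa \<Rightarrow> 'k fa \<Rightarrow> 'k fa" where
  "fa_mul p q = (\<lambda>w. \<Sum>i\<le>length w. p (take i w) * q (drop i w))"

definition fa_var :: "nat \<Rightarrow> ('k::field) fa" where
  "fa_var n = (\<lambda>w. if w = [n] then 1 else 0)"

definition fa_comm :: "('k::field) fa \<Rightarrow> 'k fa \<Rightarrow> 'k fa" where
  "fa_comm p q = fa_diff (fa_mul p q) (fa_mul q p)"

text \<open>The (two-sided) T-ideal of the free non-unital algebra generated by the
third-type identity abc + bac - bca - cba; the quotient is As_3<X>.\<close>

inductive_set third_ideal :: "('k::field) fa set" where
  gen: "a \<in> fa_carrier \<Longrightarrow> b \<in> fa_carrier \<Longrightarrow> c \<in> fa_carrier \<Longrightarrow>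
     fa_diff (fa_diff (fa_add (fa_mul (fa_mul a b) c) (fa_mul (fa_mul b a) c))
                      (fa_mul (fa_mul b c) a)) (fa_mul (fa_mul c b) a) \<in> third_ideal"
| zero: "fa_zero \<in> third_ideal"
| add: "u \<in> third_ideal \<Longrightarrow> v \<in> third_ideal \<Longrightarrow> fa_add u v \<in> third_ideal"
| smult: "u \<in> third_ideal \<Longrightarrow> fa_smult c u \<in> third_ideal"
| mult_left: "x \<in> fa_carrier \<Longrightarrow> u \<in> third_ideal \<Longrightarrow> fa_mul x u \<in> third_ideal"
| mult_right: "x \<in> fa_carrier \<Longrightarrow> u \<in> third_ideal \<Longrightarrow> fa_mul u x \<in> third_ideal"

text \<open>Formal Lie terms; the free Lie algebra of the variety [[[a,b],c],d] = 0 is the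
quotient of terms by the least congruence containing the vector space axioms,
bilinearity, alternation, Jacobi, and the nilpotency identity.\<close>

datatype 'k lterm = LV nat | LZ | LSc 'k "'k lterm" | LPl "'k lterm" "'k lterm"
  | LBr "'k lterm" "'k lterm"

inductive lie4_eq :: "('k::field) lterm \<Rightarrow> 'k lterm \<Rightarrow> bool" where
  refl: "lie4_eq s s"
| sym: "lie4_eq s t \<Longrightarrow> lie4_eq t s"
| trans: "lie4_eq s t \<Longrightarrow> lie4_eq t u \<Longrightarrow> lie4_eq s u"
| cong_sc: "lie4_eq s t \<Longrightarrow> lie4_eq (LSc c s) (LSc c t)"
| cong_pl: "lie4_eq s s' \<Longrightarrow> lie4_eq t t' \<Longrightarrow> lie4_eq (LPl s t) (LPl s' t')"
| cong_br: "lie4_eq s s' \<Longrightarrow> lie4_eq t t' \<Longrightarrow> lie4_eq (LBr s t) (LBr s' t')"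
| pl_assoc: "lie4_eq (LPl (LPl s t) u) (LPl s (LPl t u))"
| pl_comm: "lie4_eq (LPl s t) (LPl t s)"
| pl_zero: "lie4_eq (LPl s LZ) s"
| pl_neg: "lie4_eq (LPl s (LSc (-1) s)) LZ"
| sc_one: "lie4_eq (LSc 1 s) s"
| sc_sc: "lie4_eq (LSc a (LSc b s)) (LSc (a * b) s)"
| sc_distl: "lie4_eq (LSc a (LPl s t)) (LPl (LSc a s) (LSc a t))"
| sc_distr: "lie4_eq (LSc (a + b) s) (LPl (LSc a s) (LSc b s))"
| br_addl: "lie4_eq (LBr (LPl s t) u) (LPl (LBr s u) (LBr t u))"
| br_addr: "lie4_eq (LBr u (LPl s t)) (LPl (LBr u s) (LBr u t))"
| br_scl: "lie4_eq (LBr (LSc a s) t) (LSc a (LBr s t))"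
| br_scr: "lie4_eq (LBr s (LSc a t)) (LSc a (LBr s t))"
| br_alt: "lie4_eq (LBr s s) LZ"
| jacobi: "lie4_eq (LPl (LPl (LBr (LBr a b) c) (LBr (LBr b c) a)) (LBr (LBr c a) b)) LZ"
| nil4: "lie4_eq (LBr (LBr (LBr a b) c) d) LZ"

text \<open>The homomorphism sending generators to generators, with bracket the commutator
(computed in the free algebra; composing with the quotient map gives the map into
As_3<X>^(-)).\<close>

primrec lie_eval :: "('k::field) lterm \<Rightarrow> 'k fa" where
  "lie_eval (LV n) = fa_var n"
| "lie_eval LZ = fa_zero"
| "lie_eval (LSc c t) = fa_smult c (lie_eval t)"
| "lie_eval (LPl s t) = fa_add (lie_eval s) (lie_eval t)"
| "lie_eval (LBr s t) = fa_comm (lie_eval s) (lie_eval t)"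

end

theory Submission
  imports Defs "HOL.Modules"
begin

lemma lie4_equivp: "equivp lie4_eq"
  by (rule equivpI; auto simp: reflp_def symp_def transp_def intro: lie4_eq.intros)

quotient_type (overloaded) 'k lie = "('k::field) lterm" / lie4_eq
  by (rule lie4_equivp)

instantiation lie :: (field) ab_group_add
begin
lift_definition zero_lie :: "'a lie" is LZ .
lift_definition plus_lie :: "'a lie \<Rightarrow> 'a lie \<Rightarrow> 'a lie" is LPl
  by (rule lie4_eq.cong_pl)
lift_definition uminus_lie :: "'a lie \<Rightarrow> 'a lie" is "LSc (-1)"
  by (rule lie4_eq.cong_sc)
lift_definition minus_lie :: "'a lie \<Rightarrow> 'a lie \<Rightarrow> 'a lie" is "\<lambda>s t. LPl s (LSc (-1) t)"
  by (intro lie4_eq.cong_pl lie4_eq.cong_sc)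
instance
proof
  fix a b c :: "'a lie"
  show "a + b + c = a + (b + c)" by transfer (rule lie4_eq.pl_assoc)
  show "a + b = b + a" by transfer (rule lie4_eq.pl_comm)
  show "0 + a = a" by transfer (meson lie4_eq.pl_comm lie4_eq.pl_zero lie4_eq.trans)
  show "- a + a = 0" by transfer (meson lie4_eq.pl_comm lie4_eq.pl_neg lie4_eq.trans)
  show "a - b = a + - b" by transfer (rule lie4_eq.refl)
qed
end

lift_definition sc :: "'k::field \<Rightarrow> 'k lie \<Rightarrow> 'k lie" is LSc
  by (rule lie4_eq.cong_sc)
lift_definition br :: "'k::field lie \<Rightarrow> 'k lie \<Rightarrow> 'k lie" is LBr
  by (rule lie4_eq.cong_br)
lift_definition var :: "nat \<Rightarrow> 'k::field lie" is LV .

lemma sc_add_left: "sc (a + b) x = sc a x + sc b x" by transfer (rule lie4_eq.sc_distr)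
lemma sc_add_right: "sc a (x + y) = sc a x + sc a y" by transfer (rule lie4_eq.sc_distl)
lemma sc_sc: "sc a (sc b x) = sc (a * b) x" by transfer (rule lie4_eq.sc_sc)
lemma sc_one[simp]: "sc 1 x = x" by transfer (rule lie4_eq.sc_one)
lemma br_add_left: "br (x + y) z = br x z + br y z" by transfer (rule lie4_eq.br_addl)
lemma br_add_right: "br z (x + y) = br z x + br z y" by transfer (rule lie4_eq.br_addr)
lemma br_sc_left: "br (sc a x) y = sc a (br x y)" by transfer (rule lie4_eq.br_scl)
lemma br_sc_right: "br x (sc a y) = sc a (br x y)" by transfer (rule lie4_eq.br_scr)
lemma br_self[simp]: "br x x = 0" by transfer (rule lie4_eq.br_alt)
lemma jacobi: "br (br a b) c + br (br b c) a + br (br c a) b = 0" by transfer (rule lie4_eq.jacobi)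
lemma nil4[simp]: "br (br (br a b) c) d = 0" by transfer (rule lie4_eq.nil4)
lemma sc_neg1: "sc (-1) x = - x" by transfer (rule lie4_eq.refl)


interpretation M: module "sc :: 'k::field \<Rightarrow> 'k lie \<Rightarrow> 'k lie"
  by unfold_locales (auto simp: sc_add_left sc_add_right sc_sc)

lemma add_br_left: "additive (\<lambda>x. br x y)"
  by unfold_locales (rule br_add_left)
lemma add_br_right: "additive (\<lambda>y. br x y)"
  by unfold_locales (rule br_add_right)

lemma br_sum_left: "br (sum f S) y = (\<Sum>i\<in>S. br (f i) y)"
  using additive.sum[OF add_br_left] by blast
lemma br_sum_right: "br y (sum f S) = (\<Sum>i\<in>S. br y (f i))"
  using additive.sum[OF add_br_right] by blast
lemma br_zero_left[simp]: "br 0 y = 0"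
  using additive.zero[OF add_br_left] by blast
lemma br_zero_right[simp]: "br y 0 = 0"
  using additive.zero[OF add_br_right] by blast
lemma br_neg_left: "br (- x) y = - br x y"
  using additive.minus[OF add_br_left] by blast
lemma br_neg_right: "br y (- x) = - br y x"
  using additive.minus[OF add_br_right] by blast
lemma br_anti: "br x y = - br y x"
proof -
  have "br (x + y) (x + y) = 0" by simp
  hence "br x x + br y x + (br x y + br y y) = 0" by (simp only: br_add_left br_add_right)
  hence "br x y + br y x = 0" by (simp add: add.commute)
  thus ?thesis by (simp add: eq_neg_iff_add_eq_0)
qed
lemma br22[simp]: "br (br c d) (br a b) = 0"
proof -
  have "br (br (br a b) c) d + br (br c d) (br a b) + br (br d (br a b)) c = 0"
    by (rule jacobi)
  moreover have "br (br d (br a b)) c = 0"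
    by (subst br_anti[of d]) (simp add: br_neg_left)
  ultimately show ?thesis by simp
qed
lemma nil4'[simp]: "br d (br (br a b) c) = 0"
  by (subst br_anti) simp

lemma half_half: "sc (1/2) x + sc (1/2) x = (x :: 'k::field_char_0 lie)"
  by (simp flip: sc_add_left)

lemma self_neg_zero: "x = - x \<Longrightarrow> (x :: 'k::field_char_0 lie) = 0"
  by (metis half_half M.scale_minus_right add.right_inverse)

fun D :: "nat list \<Rightarrow> 'k::field lie" where
  "D [a] = var a"
| "D [a, b] = sc (1/2) (br (var a) (var b))"
| "D [a, b, c] = sc (1/3) (br (br (var a) (var b)) (var c))"
| "D _ = 0"

lemma D_long: "4 \<le> length w \<Longrightarrow> D w = 0"
  by (cases w rule: D.cases) auto


definition supp :: "('k::field) fa \<Rightarrow> nat list set" where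
  "supp p = {w. p w \<noteq> 0}"

definition lin :: "(nat list \<Rightarrow> 'k lie) \<Rightarrow> ('k::field) fa \<Rightarrow> 'k lie" where
  "lin F p = (\<Sum>w\<in>supp p. sc (p w) (F w))"

lemma lin_superset: "finite S \<Longrightarrow> supp p \<subseteq> S \<Longrightarrow> lin F p = (\<Sum>w\<in>S. sc (p w) (F w))"
  unfolding lin_def by (rule sum.mono_neutral_left) (auto simp: supp_def)

lemma lin_add:
  assumes "finite (supp p)" "finite (supp q)"
  shows "lin F (fa_add p q) = lin F p + lin F q"
proof -
  let ?S = "supp p \<union> supp q"
  have "lin F (fa_add p q) = (\<Sum>w\<in>?S. sc (fa_add p q w) (F w))"
    by (rule lin_superset) (use assms in \<open>auto simp: supp_def fa_add_def\<close>)
  also have "\<dots> = (\<Sum>w\<in>?S. sc (p w) (F w)) + (\<Sum>w\<in>?S. sc (q w) (F w))"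
    by (simp add: fa_add_def sc_add_left sum.distrib)
  also have "\<dots> = lin F p + lin F q"
  proof -
    have "lin F p = (\<Sum>w\<in>?S. sc (p w) (F w))" by (rule lin_superset) (use assms in auto)
    moreover have "lin F q = (\<Sum>w\<in>?S. sc (q w) (F w))" by (rule lin_superset) (use assms in auto)
    ultimately show ?thesis by simp
  qed
  finally show ?thesis .
qed

lemma lin_diff:
  assumes "finite (supp p)" "finite (supp q)"
  shows "lin F (fa_diff p q) = lin F p - lin F q"
proof -
  let ?S = "supp p \<union> supp q"
  have "lin F (fa_diff p q) = (\<Sum>w\<in>?S. sc (fa_diff p q w) (F w))"
    by (rule lin_superset) (use assms in \<open>auto simp: supp_def fa_diff_def\<close>)
  also have "\<dots> = (\<Sum>w\<in>?S. sc (p w) (F w)) - (\<Sum>w\<in>?S. sc (q w) (F w))"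
    by (simp add: fa_diff_def M.scale_left_diff_distrib sum_subtractf)
  also have "\<dots> = lin F p - lin F q"
  proof -
    have "lin F p = (\<Sum>w\<in>?S. sc (p w) (F w))" by (rule lin_superset) (use assms in auto)
    moreover have "lin F q = (\<Sum>w\<in>?S. sc (q w) (F w))" by (rule lin_superset) (use assms in auto)
    ultimately show ?thesis by simp
  qed
  finally show ?thesis .
qed

lemma lin_smult:
  assumes "finite (supp p)"
  shows "lin F (fa_smult c p) = sc c (lin F p)"
proof -
  have "lin F (fa_smult c p) = (\<Sum>w\<in>supp p. sc (fa_smult c p w) (F w))"
    by (rule lin_superset) (use assms in \<open>auto simp: supp_def fa_smult_def\<close>)
  also have "\<dots> = sc c (lin F p)"
    by (simp add: lin_def fa_smult_def M.scale_sum_right sc_sc)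
  finally show ?thesis .
qed

lemma lin_zero_on: "(\<And>w. w \<in> supp p \<Longrightarrow> F w = 0) \<Longrightarrow> lin F p = 0"
  unfolding lin_def by (rule sum.neutral) simp

lemma lin_cong: "(\<And>w. w \<in> supp p \<Longrightarrow> F w = G w) \<Longrightarrow> lin F p = lin G p"
  unfolding lin_def by (rule sum.cong) simp_all

lemma mul_nz:
  assumes "fa_mul p q w \<noteq> 0"
  shows "\<exists>i\<le>length w. p (take i w) \<noteq> 0 \<and> q (drop i w) \<noteq> 0"
proof (rule ccontr)
  assume "\<not> ?thesis"
  hence "fa_mul p q w = 0" unfolding fa_mul_def by (intro sum.neutral) auto
  thus False using assms by simp
qed

lemma supp_mul: "supp (fa_mul p q) \<subseteq> (\<lambda>(u,v). u @ v) ` (supp p \<times> supp q)"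
proof
  fix w assume "w \<in> supp (fa_mul p q)"
  then obtain i where "p (take i w) \<noteq> 0" "q (drop i w) \<noteq> 0"
    using mul_nz unfolding supp_def by blast
  thus "w \<in> (\<lambda>(u,v). u @ v) ` (supp p \<times> supp q)"
    by (intro image_eqI[of _ _ "(take i w, drop i w)"]) (auto simp: supp_def)
qed

lemma finite_supp_mul: "finite (supp p) \<Longrightarrow> finite (supp q) \<Longrightarrow> finite (supp (fa_mul p q))"
  by (rule finite_subset[OF supp_mul]) auto

lemma split_sum:
  fixes g :: "nat list \<times> nat list \<Rightarrow> 'k::field lie"
  assumes "\<And>x. x \<notin> A \<Longrightarrow> g x = 0"
  shows "(\<Sum>i\<le>length w. g (take i w, drop i w)) = (\<Sum>x\<in>{x\<in>A. fst x @ snd x = w}. g x)"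
proof -
  define t where "t i = (take i w, drop i w)" for i
  define I where "I = {i. i \<le> length w \<and> t i \<in> A}"
  have "(\<Sum>i\<le>length w. g (take i w, drop i w)) = (\<Sum>i\<in>I. g (t i))"
    unfolding t_def by (rule sum.mono_neutral_right) (auto simp: I_def t_def assms)
  also have "\<dots> = (\<Sum>x\<in>t ` I. g x)"
  proof -
    have "inj_on t I"
      by (rule inj_onI) (clarsimp simp: I_def t_def, metis length_take min.absorb2)
    thus ?thesis by (simp add: sum.reindex)
  qed
  also have "t ` I = {x\<in>A. fst x @ snd x = w}"
  proof
    show "t ` I \<subseteq> {x\<in>A. fst x @ snd x = w}" by (auto simp: I_def t_def)
    show "{x\<in>A. fst x @ snd x = w} \<subseteq> t ` I"
    proof
      fix x assume x: "x \<in> {x\<in>A. fst x @ snd x = w}"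
      obtain u v where [simp]: "x = (u, v)" by (cases x)
      have "t (length u) = x" using x by (auto simp: t_def)
      moreover have "length u \<in> I" using x by (auto simp: I_def t_def)
      ultimately show "x \<in> t ` I" by (metis image_eqI)
    qed
  qed
  finally show ?thesis .
qed

lemma lin_mul:
  assumes fp: "finite (supp p)" and fq: "finite (supp q)"
  shows "lin F (fa_mul p q) = (\<Sum>u\<in>supp p. \<Sum>v\<in>supp q. sc (p u * q v) (F (u @ v)))"
proof -
  define A where "A = supp p \<times> supp q"
  define W where "W = (\<lambda>(u,v). u @ v) ` A"
  define g where "g x = sc (p (fst x) * q (snd x)) (F (fst x @ snd x))" for x
  have fA: "finite A" using fp fq by (simp add: A_def)
  have g0: "x \<notin> A \<Longrightarrow> g x = 0" for x by (cases x) (auto simp: g_def A_def supp_def)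
  have "lin F (fa_mul p q) = (\<Sum>w\<in>W. sc (fa_mul p q w) (F w))"
    by (rule lin_superset) (use fA supp_mul in \<open>auto simp: W_def A_def\<close>)
  also have "\<dots> = (\<Sum>w\<in>W. \<Sum>i\<le>length w. g (take i w, drop i w))"
    by (simp add: fa_mul_def g_def M.scale_sum_left)
  also have "\<dots> = (\<Sum>w\<in>W. \<Sum>x\<in>{x\<in>A. fst x @ snd x = w}. g x)"
    by (rule sum.cong[OF HOL.refl], rule split_sum, rule g0)
  also have "\<dots> = (\<Sum>x\<in>A. g x)"
  proof -
    have "W = (\<lambda>x. fst x @ snd x) ` A" by (auto simp: W_def split_def)
    thus ?thesis using sum.image_gen[OF fA, where g="\<lambda>x. fst x @ snd x" and h=g] by simp
  qed
  also have "\<dots> = (\<Sum>u\<in>supp p. \<Sum>v\<in>supp q. sc (p u * q v) (F (u @ v)))"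
    by (simp add: A_def g_def sum.cartesian_product split_def)
  finally show ?thesis .
qed


lemma sc_comb: "sc a x + sc b x = sc (a + b) x" by (simp add: sc_add_left)
lemma sc_comb_diff: "sc a x - sc b x = sc (a - b) x" by (simp add: M.scale_left_diff_distrib)
lemma sc_neg_scalar: "- sc a x = sc (- a) x" by simp

lemma br_D_long:
  assumes "4 \<le> length u + length v"
  shows "br (D u) (D v :: 'k::field lie) = 0"
  using assms
  by (cases u rule: D.cases; cases v rule: D.cases) (simp_all add: br_sc_left br_sc_right)

lemma D_gen:
  assumes "u \<noteq> []" "v \<noteq> []" "z \<noteq> []"
  shows "D (u @ v @ z) + D (v @ u @ z) - D (v @ z @ u) - D (z @ v @ u) = (0 :: 'k::field lie)"
proof (cases "length u = 1 \<and> length v = 1 \<and> length z = 1")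
  case True
  have "u = [hd u]" "v = [hd v]" "z = [hd z]" using True by (cases u; simp; cases v; simp; cases z; simp)+
  then obtain i j k where [simp]: "u = [i]" "v = [j]" "z = [k]" by blast
  have "br (var j) (var i) = - br (var i) (var j :: 'k lie)" by (rule br_anti)
  moreover have "br (var k) (var j) = - br (var j) (var k :: 'k lie)" by (rule br_anti)
  ultimately show ?thesis by (simp add: br_neg_left)
next
  case False
  hence "4 \<le> length u + length v + length z"
  proof -
    have "0 < length u" "0 < length v" "0 < length z" using assms by auto
    thus ?thesis using False by arith
  qed
  thus ?thesis by (simp add: D_long)
qed

definition Dl :: "nat list \<Rightarrow> nat list \<Rightarrow> 'k::field lie" where
  "Dl u v = D (u @ v) - D (v @ u) - br (D u) (D v)"

lemma Dl_11: "Dl [i] [j] = (0 :: 'k::field_char_0 lie)"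
proof -
  have "br (var j) (var i) = - br (var i) (var j :: 'k lie)" by (rule br_anti)
  thus ?thesis by (simp add: Dl_def half_half)
qed

lemma Dl_zero:
  assumes "u \<noteq> []" "v \<noteq> []" "\<not> (length u = 1 \<and> length v = 2)" "\<not> (length u = 2 \<and> length v = 1)"
  shows "Dl u v = (0 :: 'k::field_char_0 lie)"
proof (cases "length u = 1 \<and> length v = 1")
  case True
  have "u = [hd u]" "v = [hd v]" using True by (cases u; simp; cases v; simp)+
  then obtain i j where [simp]: "u = [i]" "v = [j]" by blast
  show ?thesis by (simp add: Dl_11)
next
  case False
  have "0 < length u" "0 < length v" using assms by auto
  hence l: "4 \<le> length u + length v" using False assms(3,4) by arith
  have "D (u @ v) = (0 :: 'k lie)" by (rule D_long) (use l in simp)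
  moreover have "D (v @ u) = (0 :: 'k lie)" by (rule D_long) (use l in simp)
  moreover have "br (D u) (D v) = (0 :: 'k lie)" by (rule br_D_long[OF l])
  ultimately show ?thesis by (simp add: Dl_def)
qed


lemma Dl_12:
  "Dl [i] [j, k] = (Dl [i] [k, j] :: 'k::field_char_0 lie)"
proof -
  define A :: "'k lie" where "A = br (br (var i) (var j)) (var k)"
  define B :: "'k lie" where "B = br (br (var j) (var k)) (var i)"
  define C :: "'k lie" where "C = br (br (var k) (var i)) (var j)"
  have "A + B + C = 0" using jacobi[of "var i" "var j" "var k"]
    unfolding A_def B_def C_def .
  hence jac: "C = - A - B"
    by (metis add.commute add_diff_cancel_left' diff_0 diff_add_cancel diff_diff_eq)
  have kj: "br (var k) (var j) = - br (var j) (var k :: 'k lie)" by (rule br_anti)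
  have ik: "br (var i) (var k) = - br (var k) (var i :: 'k lie)" by (rule br_anti)
  have e1: "Dl [i] [j, k] = sc (1/3) A - sc (1/3) B + sc (1/2) B"
  proof -
    have "br (var i) (br (var j) (var k)) = - B" unfolding B_def by (rule br_anti)
    thus ?thesis by (simp add: Dl_def A_def B_def br_sc_right)
  qed
  have e2: "Dl [i] [k, j] = - sc (1/3) C + sc (1/3) B - sc (1/2) B"
  proof -
    have "br (var i) (br (var k) (var j)) = - br (br (var k) (var j)) (var i :: 'k lie)" by (rule br_anti)
    hence 1: "br (var i) (br (var k) (var j)) = B"
      unfolding B_def kj by (simp add: br_neg_left)
    have 2: "br (br (var i) (var k)) (var j) = - C"
      unfolding C_def ik by (simp add: br_neg_left)
    have 3: "br (br (var k) (var j)) (var i) = - B"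
      unfolding B_def kj by (simp add: br_neg_left)
    show ?thesis by (simp add: Dl_def br_sc_right 1 2 3)
  qed
  have "Dl [i] [j, k] - Dl [i] [k, j] = (0 :: 'k lie)"
  proof -
    have t3: "sc (1/3) B + sc (1/3) B + sc (1/3) B = B" by (simp add: sc_comb)
    have t2: "sc (1/2) B + sc (1/2) B = B" by (rule half_half)
    have t3': "sc (1/3) B + (sc (1/3) B + sc (1/3) B) = B" using t3 by (simp add: add.assoc)
    show ?thesis unfolding e1 e2 jac
      by (simp add: M.scale_right_diff_distrib algebra_simps t2 t3')
  qed
  thus ?thesis by simp
qed


lemma Dl_21:
  "Dl [i, j] [k] = (Dl [j, i] [k] :: 'k::field_char_0 lie)"
proof -
  define A :: "'k lie" where "A = br (br (var i) (var j)) (var k)"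
  define B :: "'k lie" where "B = br (br (var j) (var k)) (var i)"
  define C :: "'k lie" where "C = br (br (var k) (var i)) (var j)"
  have "A + B + C = 0" using jacobi[of "var i" "var j" "var k"]
    unfolding A_def B_def C_def .
  hence jac: "C = - A - B"
    by (metis add.commute add_diff_cancel_left' diff_0 diff_add_cancel diff_diff_eq)
  have ji: "br (var j) (var i) = - br (var i) (var j :: 'k lie)" by (rule br_anti)
  have kj: "br (var k) (var j) = - br (var j) (var k :: 'k lie)" by (rule br_anti)
  have e1: "Dl [i, j] [k] = sc (1/3) A - sc (1/3) C - sc (1/2) A"
    by (simp add: Dl_def A_def C_def br_sc_left)
  have e2: "Dl [j, i] [k] = - sc (1/3) A + sc (1/3) B + sc (1/2) A"
  proof -
    have 1: "br (br (var j) (var i)) (var k) = - A"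
      unfolding A_def ji by (simp add: br_neg_left)
    have 2: "br (br (var k) (var j)) (var i) = - B"
      unfolding B_def kj by (simp add: br_neg_left)
    show ?thesis by (simp add: Dl_def br_sc_left 1 2)
  qed
  have "Dl [i, j] [k] - Dl [j, i] [k] = (0 :: 'k lie)"
  proof -
    have t3: "sc (1/3) A + sc (1/3) A + sc (1/3) A = A" by (simp add: sc_comb)
    have t2: "sc (1/2) A + sc (1/2) A = A" by (rule half_half)
    have t3': "sc (1/3) A + (sc (1/3) A + sc (1/3) A) = A" using t3 by (simp add: add.assoc)
    show ?thesis unfolding e1 e2 jac
      by (simp add: M.scale_right_diff_distrib algebra_simps t2 t3')
  qed
  thus ?thesis by simp
qed

definition low :: "nat \<Rightarrow> ('k::field) fa \<Rightarrow> bool" where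
  "low n p = (\<forall>w. length w < n \<longrightarrow> p w = 0)"

lemma low_mul:
  assumes "low m p" "low n q"
  shows "low (m + n) (fa_mul p q)"
  unfolding low_def
proof (intro allI impI)
  fix w :: "nat list" assume w: "length w < m + n"
  show "fa_mul p q w = 0" unfolding fa_mul_def
  proof (rule sum.neutral, rule ballI)
    fix i assume "i \<in> {..length w}"
    show "p (take i w) * q (drop i w) = 0"
    proof (cases "i < m")
      case True thus ?thesis using assms(1) \<open>i \<in> {..length w}\<close> by (simp add: low_def)
    next
      case False
      hence "length (drop i w) < n" using w \<open>i \<in> {..length w}\<close> by simp
      thus ?thesis using assms(2) by (simp add: low_def)
    qed
  qed
qed

lemma carrier_iff: "p \<in> fa_carrier \<longleftrightarrow> finite (supp p) \<and> p [] = 0"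
  by (simp add: fa_carrier_def supp_def)

lemma carrier_low: "p \<in> fa_carrier \<Longrightarrow> low 1 p"
  by (auto simp: carrier_iff low_def)

lemma supp_nonempty: "p \<in> fa_carrier \<Longrightarrow> w \<in> supp p \<Longrightarrow> w \<noteq> []"
  by (auto simp: carrier_iff supp_def)

lemma carrier_mul: "p \<in> fa_carrier \<Longrightarrow> q \<in> fa_carrier \<Longrightarrow> fa_mul p q \<in> fa_carrier"
  using low_mul[OF carrier_low carrier_low, of p q] finite_supp_mul[of p q]
  by (auto simp: carrier_iff low_def)

lemma supp_add: "supp (fa_add p q) \<subseteq> supp p \<union> supp q"
  by (auto simp: supp_def fa_add_def)
lemma supp_diff: "supp (fa_diff p q) \<subseteq> supp p \<union> supp q"
  by (auto simp: supp_def fa_diff_def)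
lemma supp_smult: "supp (fa_smult c p) \<subseteq> supp p"
  by (auto simp: supp_def fa_smult_def)

lemma carrier_add: "p \<in> fa_carrier \<Longrightarrow> q \<in> fa_carrier \<Longrightarrow> fa_add p q \<in> fa_carrier"
  using supp_add[of p q] by (auto simp: carrier_iff fa_add_def intro: finite_subset)
lemma carrier_diff: "p \<in> fa_carrier \<Longrightarrow> q \<in> fa_carrier \<Longrightarrow> fa_diff p q \<in> fa_carrier"
  using supp_diff[of p q] by (auto simp: carrier_iff fa_diff_def intro: finite_subset)
lemma carrier_smult: "p \<in> fa_carrier \<Longrightarrow> fa_smult c p \<in> fa_carrier"
  using supp_smult[of c p] by (auto simp: carrier_iff fa_smult_def intro: finite_subset)
lemma carrier_zero: "fa_zero \<in> fa_carrier"
  by (simp add: carrier_iff supp_def fa_zero_def)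
lemma supp_var: "supp (fa_var n) = {[n]}"
  by (auto simp: supp_def fa_var_def)
lemma carrier_var: "fa_var n \<in> fa_carrier"
  by (simp add: carrier_iff supp_var) (simp add: fa_var_def)
lemma carrier_comm: "p \<in> fa_carrier \<Longrightarrow> q \<in> fa_carrier \<Longrightarrow> fa_comm p q \<in> fa_carrier"
  unfolding fa_comm_def by (intro carrier_diff carrier_mul)

lemma lin_mul':
  assumes "finite (supp p)" "finite (supp q)"
  shows "lin F (fa_mul p q) = lin (\<lambda>u. lin (\<lambda>v. F (u @ v)) q) p"
  unfolding lin_mul[OF assms] by (simp add: lin_def M.scale_sum_right sc_sc)

lemma lin_swap: "lin (\<lambda>u. lin (\<lambda>v. G u v) q) p = lin (\<lambda>v. lin (\<lambda>u. G u v) p) q"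
  unfolding lin_def M.scale_sum_right sc_sc
  by (subst sum.swap) (simp add: mult.commute)

lemma lin_F_add: "lin F p + lin G p = lin (\<lambda>w. F w + G w) p"
  by (simp add: lin_def sc_add_right sum.distrib)
lemma lin_F_diff: "lin F p - lin G p = lin (\<lambda>w. F w - G w) p"
  by (simp add: lin_def M.scale_right_diff_distrib sum_subtractf)

lemma lin_br: "br (lin F p) (lin G q) = lin (\<lambda>u. lin (\<lambda>v. br (F u) (G v)) q) p"
  unfolding lin_def by (subst br_sum_left) (simp add: br_sum_right br_sc_left br_sc_right M.scale_sum_right sc_sc mult.commute)


definition lin3 :: "('k::field) fa \<Rightarrow> 'k fa \<Rightarrow> 'k fa \<Rightarrow> (nat list \<Rightarrow> nat list \<Rightarrow> nat list \<Rightarrow> 'k lie) \<Rightarrow> 'k lie" where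
  "lin3 a b c G = lin (\<lambda>u. lin (\<lambda>v. lin (\<lambda>z. G u v z) c) b) a"

lemma lin3_swap12: "lin3 a b c G = lin3 b a c (\<lambda>x y z. G y x z)"
  unfolding lin3_def by (rule lin_swap)

lemma lin3_swap23: "lin3 a b c G = lin3 a c b (\<lambda>x y z. G x z y)"
  unfolding lin3_def by (rule arg_cong[where f="\<lambda>F. lin F a"], rule ext, rule lin_swap)

lemma lin3_add: "lin3 a b c G1 + lin3 a b c G2 = lin3 a b c (\<lambda>x y z. G1 x y z + G2 x y z)"
  by (simp add: lin3_def lin_F_add)
lemma lin3_diff: "lin3 a b c G1 - lin3 a b c G2 = lin3 a b c (\<lambda>x y z. G1 x y z - G2 x y z)"
  by (simp add: lin3_def lin_F_diff)

lemma lin3_zero: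
  assumes "\<And>u v z. u \<in> supp a \<Longrightarrow> v \<in> supp b \<Longrightarrow> z \<in> supp c \<Longrightarrow> G u v z = 0"
  shows "lin3 a b c G = 0"
  unfolding lin3_def by (intro lin_zero_on) (simp add: assms)

lemma lin_mul3:
  assumes "finite (supp a)" "finite (supp b)" "finite (supp c)"
  shows "lin F (fa_mul (fa_mul a b) c) = lin3 a b c (\<lambda>u v z. F (u @ v @ z))"
  unfolding lin3_def
  by (simp add: lin_mul'[OF finite_supp_mul[OF assms(1,2)] assms(3)] lin_mul'[OF assms(1,2)])

lemma ideal_inv:
  assumes "u \<in> third_ideal"
  shows "u \<in> fa_carrier \<and> low 3 u \<and> lin D u = (0 :: 'k::field lie)"
  using assms
proof (induction rule: third_ideal.induct)
  case (gen a b c)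
  let ?t1 = "fa_mul (fa_mul a b) c" and ?t2 = "fa_mul (fa_mul b a) c"
    and ?t3 = "fa_mul (fa_mul b c) a" and ?t4 = "fa_mul (fa_mul c b) a"
  have C: "?t1 \<in> fa_carrier" "?t2 \<in> fa_carrier" "?t3 \<in> fa_carrier" "?t4 \<in> fa_carrier"
    using gen by (simp_all add: carrier_mul)
  have L: "low 3 ?t1" "low 3 ?t2" "low 3 ?t3" "low 3 ?t4"
    using low_mul[OF low_mul[OF carrier_low carrier_low] carrier_low] gen
    by (simp_all add: numeral_3_eq_3)
  have F: "finite (supp a)" "finite (supp b)" "finite (supp c)"
    using gen by (simp_all add: carrier_iff)
  have FC: "finite (supp ?t1)" "finite (supp ?t2)" "finite (supp ?t3)" "finite (supp ?t4)"
    using C by (simp_all add: carrier_iff)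
  have "lin D (fa_diff (fa_diff (fa_add ?t1 ?t2) ?t3) ?t4)
      = lin D ?t1 + lin D ?t2 - lin D ?t3 - lin D ?t4"
    using FC supp_add[of ?t1 ?t2] supp_diff[of "fa_add ?t1 ?t2" ?t3]
    by (simp add: lin_diff lin_add finite_subset)
  also have "\<dots> = lin3 a b c (\<lambda>u v z. D (u @ v @ z)) + lin3 a b c (\<lambda>u v z. D (v @ u @ z))
      - lin3 a b c (\<lambda>u v z. D (v @ z @ u)) - lin3 a b c (\<lambda>u v z. D (z @ v @ u))"
  proof -
    have 1: "lin D ?t1 = lin3 a b c (\<lambda>u v z. D (u @ v @ z))" by (simp add: lin_mul3 F)
    have 2: "lin D ?t2 = lin3 a b c (\<lambda>u v z. D (v @ u @ z))"
      by (simp add: lin_mul3 F lin3_swap12[of b a c])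
    have 3: "lin D ?t3 = lin3 a b c (\<lambda>u v z. D (v @ z @ u))"
      by (simp add: lin_mul3 F lin3_swap23[of b c a] lin3_swap12[of b a c])
    have 4: "lin D ?t4 = lin3 a b c (\<lambda>u v z. D (z @ v @ u))"
      by (simp add: lin_mul3 F lin3_swap12[of c b a] lin3_swap23[of b c a] lin3_swap12[of b a c])
    show ?thesis by (simp add: 1 2 3 4)
  qed
  also have "\<dots> = lin3 a b c (\<lambda>u v z. D (u @ v @ z) + D (v @ u @ z) - D (v @ z @ u) - D (z @ v @ u))"
    by (simp add: lin3_add lin3_diff)
  also have "\<dots> = 0"
    by (rule lin3_zero, rule D_gen) (use gen supp_nonempty in auto)
  finally have "lin D (fa_diff (fa_diff (fa_add ?t1 ?t2) ?t3) ?t4) = (0 :: 'k lie)" .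
  moreover have "low 3 (fa_diff (fa_diff (fa_add ?t1 ?t2) ?t3) ?t4)"
    using L by (simp add: low_def fa_diff_def fa_add_def)
  moreover have "fa_diff (fa_diff (fa_add ?t1 ?t2) ?t3) ?t4 \<in> fa_carrier"
    using C by (intro carrier_diff carrier_add)
  ultimately show ?case by simp
next
  case zero
  show ?case using carrier_zero by (simp add: low_def fa_zero_def lin_def supp_def)
next
  case (add u v)
  have "fa_add u v \<in> fa_carrier" using add by (simp add: carrier_add)
  moreover have "low 3 (fa_add u v)" using add by (simp add: low_def fa_add_def)
  moreover have "lin D (fa_add u v) = (0 :: 'k lie)" using add by (simp add: lin_add carrier_iff)
  ultimately show ?case by simp
next
  case (smult u c)
  have "fa_smult c u \<in> fa_carrier" using smult by (simp add: carrier_smult)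
  moreover have "low 3 (fa_smult c u)" using smult by (simp add: low_def fa_smult_def)
  moreover have "lin D (fa_smult c u) = (0 :: 'k lie)" using smult by (simp add: lin_smult carrier_iff)
  ultimately show ?case by simp
next
  case (mult_left x u)
  have "lin D (fa_mul x u) = lin (\<lambda>w. lin (\<lambda>v. D (w @ v)) u) x"
    using mult_left by (simp add: lin_mul' carrier_iff)
  also have "\<dots> = (0 :: 'k lie)"
  proof (rule lin_zero_on, rule lin_zero_on)
    fix w v assume "w \<in> supp x" "v \<in> supp u"
    hence "w \<noteq> []" "3 \<le> length v" using mult_left supp_nonempty
      by (auto simp: low_def supp_def not_less[symmetric])
    hence "4 \<le> length (w @ v)" by (cases w) auto
    thus "D (w @ v) = 0" by (rule D_long)
  qed
  finally show ?case using mult_left low_mul[OF carrier_low, of x 3 u]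
    by (simp add: carrier_mul low_def)
next
  case (mult_right x u)
  have "lin D (fa_mul u x) = lin (\<lambda>w. lin (\<lambda>v. D (w @ v)) x) u"
    using mult_right by (simp add: lin_mul' carrier_iff)
  also have "\<dots> = (0 :: 'k lie)"
  proof (rule lin_zero_on, rule lin_zero_on)
    fix w v assume "w \<in> supp u" "v \<in> supp x"
    hence "v \<noteq> []" "3 \<le> length w" using mult_right supp_nonempty
      by (auto simp: low_def supp_def not_less[symmetric])
    hence "4 \<le> length (w @ v)" by (cases v) auto
    thus "D (w @ v) = 0" by (rule D_long)
  qed
  finally show ?case using mult_right low_mul[OF _ carrier_low, of 3 u x]
    by (simp add: carrier_mul low_def)
qed


lemma pair_zero:
  fixes h :: "nat list \<Rightarrow> 'k::field_char_0 lie"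
  assumes "finite S" "rev ` S = S" "\<And>v. h (rev v) = - h v"
  shows "sum h S = 0"
proof -
  have "sum h S = sum h (rev ` S)" using assms(2) by simp
  also have "\<dots> = sum (h \<circ> rev) S" by (rule sum.reindex) (simp add: inj_on_def)
  also have "\<dots> = - sum h S" by (simp add: assms(3) sum_negf)
  finally show ?thesis by (rule self_neg_zero)
qed

lemma rev_closed: "rev ` (A \<union> rev ` A) = A \<union> rev ` A"
  by (simp add: image_Un image_image Un_commute)

definition asymw :: "('k::field) fa \<Rightarrow> bool" where
  "asymw P = (\<forall>a b. P [a, b] = - P [b, a])"

lemma asym_rev:
  assumes "asymw P" "length v = 2"
  shows "P (rev v) = - P v"
proof -
  obtain a b where v: "v = [a, b]" using assms(2) by (cases v rule: D.cases) auto
  have "P [b, a] = - P [a, b]" using assms(1) unfolding asymw_def by blast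
  thus ?thesis by (simp add: v)
qed

definition Dl12 :: "nat list \<Rightarrow> nat list \<Rightarrow> 'k::field lie" where
  "Dl12 u v = (if length u = 1 \<and> length v = 2 then Dl u v else 0)"
definition Dl21 :: "nat list \<Rightarrow> nat list \<Rightarrow> 'k::field lie" where
  "Dl21 u v = (if length u = 2 \<and> length v = 1 then Dl u v else 0)"

lemma Dl_split: "u \<noteq> [] \<Longrightarrow> v \<noteq> [] \<Longrightarrow> Dl u v = Dl12 u v + (Dl21 u v :: 'k::field_char_0 lie)"
  by (auto simp: Dl12_def Dl21_def Dl_zero)

lemma Dl12_rev: "Dl12 u (rev v) = (Dl12 u v :: 'k::field_char_0 lie)"
proof (cases "length u = 1 \<and> length v = 2")
  case True
  then obtain i j k where "u = [i]" "v = [j, k]"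
    by (cases u rule: D.cases; cases v rule: D.cases) auto
  thus ?thesis by (simp add: Dl12_def Dl_12)
next
  case False thus ?thesis unfolding Dl12_def by (simp only: length_rev) simp
qed

lemma Dl21_rev: "Dl21 (rev u) v = (Dl21 u v :: 'k::field_char_0 lie)"
proof (cases "length u = 2 \<and> length v = 1")
  case True
  then obtain i j k where "u = [i, j]" "v = [k]"
    by (cases u rule: D.cases; cases v rule: D.cases) auto
  thus ?thesis by (simp add: Dl21_def Dl_21)
next
  case False thus ?thesis unfolding Dl21_def by (simp only: length_rev) simp
qed

lemma inner12:
  assumes "finite (supp R)" "asymw R"
  shows "lin (\<lambda>v. Dl12 u v) R = (0 :: 'k::field_char_0 lie)"
proof -
  let ?S = "supp R \<union> rev ` supp R"
  have "lin (\<lambda>v. Dl12 u v) R = (\<Sum>v\<in>?S. sc (R v) (Dl12 u v))"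
    by (rule lin_superset) (use assms in auto)
  also have "\<dots> = 0"
  proof (rule pair_zero)
    show "finite ?S" using assms by simp
    show "rev ` ?S = ?S" by (rule rev_closed)
    fix v
    show "sc (R (rev v)) (Dl12 u (rev v)) = - sc (R v) (Dl12 u v :: 'k lie)"
    proof (cases "length v = 2")
      case True thus ?thesis using asym_rev[OF assms(2) True] by (simp add: Dl12_rev)
    next
      case False thus ?thesis by (simp add: Dl12_def)
    qed
  qed
  finally show ?thesis .
qed

lemma outer21:
  assumes "finite (supp P)" "asymw P"
  shows "lin (\<lambda>u. lin (\<lambda>v. Dl21 u v) R) P = (0 :: 'k::field_char_0 lie)"
proof -
  let ?S = "supp P \<union> rev ` supp P"
  have "lin (\<lambda>u. lin (\<lambda>v. Dl21 u v) R) P = (\<Sum>u\<in>?S. sc (P u) (lin (\<lambda>v. Dl21 u v) R))"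
    by (rule lin_superset) (use assms in auto)
  also have "\<dots> = 0"
  proof (rule pair_zero)
    show "finite ?S" using assms by simp
    show "rev ` ?S = ?S" by (rule rev_closed)
    fix u
    show "sc (P (rev u)) (lin (\<lambda>v. Dl21 (rev u) v) R) = - sc (P u) (lin (\<lambda>v. Dl21 u v) R :: 'k lie)"
    proof (cases "length u = 2")
      case True thus ?thesis using asym_rev[OF assms(2) True] by (simp add: Dl21_rev)
    next
      case False
      hence "lin (\<lambda>v. Dl21 u v) R = (0 :: 'k lie)" "lin (\<lambda>v. Dl21 (rev u) v) R = (0 :: 'k lie)"
        by (auto intro!: lin_zero_on simp: Dl21_def)
      thus ?thesis by simp
    qed
  qed
  finally show ?thesis .
qed

lemma mul2: "p [] = 0 \<Longrightarrow> q [] = 0 \<Longrightarrow> fa_mul p q [a, b] = p [a] * q [b]"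
  by (simp add: fa_mul_def atMost_Suc)

lemma lie_main:
  "lie_eval s \<in> fa_carrier \<and> asymw (lie_eval s) \<and> lin D (lie_eval s) = (abs_lie s :: 'k::field_char_0 lie)"
proof (induction s)
  case (LV n)
  have "lin D (fa_var n) = (var n :: 'k lie)"
    by (simp add: lin_def supp_var) (simp add: fa_var_def)
  moreover have "asymw (fa_var n :: 'k fa)" by (simp add: asymw_def fa_var_def)
  ultimately show ?case using carrier_var[of n] by (simp add: var.abs_eq)
next
  case LZ
  have "lin D (fa_zero :: 'k fa) = (0 :: 'k lie)" by (simp add: lin_def supp_def fa_zero_def)
  moreover have "(0 :: 'k lie) = abs_lie LZ" by (rule zero_lie.abs_eq)
  moreover have "asymw (fa_zero :: 'k fa)" by (simp add: asymw_def fa_zero_def)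
  ultimately show ?case using carrier_zero by simp
next
  case (LSc c t)
  hence c: "lie_eval t \<in> fa_carrier" and a: "asymw (lie_eval t)" and l: "lin D (lie_eval t) = (abs_lie t :: 'k lie)"
    by simp_all
  have "lin D (fa_smult c (lie_eval t)) = sc c (abs_lie t :: 'k lie)"
    using c l by (simp add: lin_smult carrier_iff)
  also have "\<dots> = abs_lie (LSc c t)" by (rule sc.abs_eq)
  finally have 1: "lin D (fa_smult c (lie_eval t)) = (abs_lie (LSc c t) :: 'k lie)" .
  have 2: "asymw (fa_smult c (lie_eval t))" unfolding asymw_def
  proof (intro allI)
    fix x y
    have "lie_eval t [x, y] = - lie_eval t [y, x]" using a unfolding asymw_def by blast
    thus "fa_smult c (lie_eval t) [x, y] = - fa_smult c (lie_eval t) [y, x]" by (simp add: fa_smult_def)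
  qed
  show ?case using 1 2 carrier_smult[OF c] by simp
next
  case (LPl s t)
  hence c: "lie_eval s \<in> fa_carrier" "lie_eval t \<in> fa_carrier" and a: "asymw (lie_eval s)" "asymw (lie_eval t)"
    and l: "lin D (lie_eval s) = (abs_lie s :: 'k lie)" "lin D (lie_eval t) = (abs_lie t :: 'k lie)"
    by simp_all
  have "lin D (fa_add (lie_eval s) (lie_eval t)) = abs_lie s + (abs_lie t :: 'k lie)"
    using c l by (simp add: lin_add carrier_iff)
  also have "\<dots> = abs_lie (LPl s t)" by (rule plus_lie.abs_eq)
  finally have 1: "lin D (fa_add (lie_eval s) (lie_eval t)) = (abs_lie (LPl s t) :: 'k lie)" .
  have 2: "asymw (fa_add (lie_eval s) (lie_eval t))" unfolding asymw_def
  proof (intro allI)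
    fix x y
    have "lie_eval s [x, y] = - lie_eval s [y, x]" "lie_eval t [x, y] = - lie_eval t [y, x]"
      using a unfolding asymw_def by blast+
    thus "fa_add (lie_eval s) (lie_eval t) [x, y] = - fa_add (lie_eval s) (lie_eval t) [y, x]"
      by (simp add: fa_add_def)
  qed
  show ?case using 1 2 carrier_add[OF c] by simp
next
  case (LBr s t)
  define P where "P = lie_eval s"
  define R where "R = lie_eval t"
  have cP: "P \<in> fa_carrier" and aP: "asymw P" and lP: "lin D P = (abs_lie s :: 'k lie)"
    using LBr.IH(1) by (simp_all add: P_def)
  have cR: "R \<in> fa_carrier" and aR: "asymw R" and lR: "lin D R = (abs_lie t :: 'k lie)"
    using LBr.IH(2) by (simp_all add: R_def)
  have fP: "finite (supp P)" and fR: "finite (supp R)" using cP cR by (simp_all add: carrier_iff)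
  have c: "fa_comm P R \<in> fa_carrier" using cP cR by (rule carrier_comm)
  have a: "asymw (fa_comm P R)" unfolding asymw_def
  proof (intro allI)
    fix x y
    have "P [] = 0" "R [] = 0" using cP cR by (simp_all add: carrier_iff)
    hence "fa_comm P R [x, y] = P [x] * R [y] - R [x] * P [y]"
      "fa_comm P R [y, x] = P [y] * R [x] - R [y] * P [x]"
      by (simp_all add: fa_comm_def fa_diff_def mul2)
    thus "fa_comm P R [x, y] = - fa_comm P R [y, x]" by (simp add: mult.commute)
  qed
  have "lin D (fa_comm P R) - br (lin D P) (lin D R) = (0 :: 'k lie)"
  proof -
    have "lin D (fa_comm P R) = lin (\<lambda>u. lin (\<lambda>v. D (u @ v)) R) P - lin (\<lambda>v. lin (\<lambda>u. D (v @ u)) P) R"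
      unfolding fa_comm_def
      by (simp add: lin_diff finite_supp_mul fP fR lin_mul')
    also have "lin (\<lambda>v. lin (\<lambda>u. D (v @ u)) P) R = lin (\<lambda>u. lin (\<lambda>v. D (v @ u)) R) P"
      by (rule lin_swap)
    finally have 1: "lin D (fa_comm P R) = lin (\<lambda>u. lin (\<lambda>v. D (u @ v)) R) P - lin (\<lambda>u. lin (\<lambda>v. D (v @ u)) R) P" .
    have 2: "br (lin D P) (lin D R) = lin (\<lambda>u. lin (\<lambda>v. br (D u) (D v)) R) P"
      by (rule lin_br)
    have "lin D (fa_comm P R) - br (lin D P) (lin D R) = lin (\<lambda>u. lin (\<lambda>v. Dl u v) R) P"
      unfolding 1 2 by (simp add: Dl_def lin_F_diff)
    also have "\<dots> = lin (\<lambda>u. lin (\<lambda>v. Dl12 u v) R + lin (\<lambda>v. Dl21 u v) R) P"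
      by (rule lin_cong, simp add: lin_F_add, rule lin_cong, rule Dl_split)
         (use cP cR supp_nonempty in auto)
    also have "\<dots> = 0"
      by (simp add: inner12[OF fR aR] outer21[OF fP aP] flip: lin_F_add)
    finally show ?thesis .
  qed
  hence "lin D (fa_comm P R) = br (abs_lie s) (abs_lie t :: 'k lie)" using lP lR by simp
  thus ?case using c a by (simp add: P_def R_def br.abs_eq)
qed

theorem mainTheorem7:
  fixes s t :: "('k::field_char_0) lterm"
  assumes "fa_diff (lie_eval s) (lie_eval t) \<in> third_ideal"
  shows "lie4_eq s t"
proof -
  have "lin D (fa_diff (lie_eval s) (lie_eval t)) = (0 :: 'k lie)"
    using ideal_inv[OF assms] by simp
  hence "lin D (lie_eval s) - lin D (lie_eval t) = (0 :: 'k lie)"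
    using lie_main[of s] lie_main[of t] by (simp add: lin_diff carrier_iff)
  hence "(abs_lie s :: 'k lie) = abs_lie t" using lie_main[of s] lie_main[of t] by simp
  thus ?thesis by (simp add: lie.abs_eq_iff)
qed

end
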